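(* Let $\mathfrak{G}=(Y,R,E)$ be a descriptive $\mathsf{MS4}$-frame and $Q=E\circ R$. Then (1) $E[\operatorname{qmax}Y]=E_Q[\operatorname{qmax}Y]$; (2) $\mathfrak{G}$ satisfies the global Kuroda principle iff for every $x\in\operatorname{qmax}Y$, $E_Q[x]\subseteq\operatorname{qmax}Y$ (equivalently, $E_Q[\operatorname{qmax}Y]=\operatorname{qmax}Y$).
   Context: A descriptive $\mathsf{MS4}$-frame is $(Y,R,E)$ with $Y$ a Stone space, $R$ a continuous quasi-order, $E$ a continuous equivalence relation (continuous: $R[x]=\{y:xRy\}$ closed for all $x$, $R^{-1}[U]$ clopen for clopen $U$), such that $xEy$, $yRz$ imply $\exists u$ with $xRu$, $uEz$. $x(E\circ R)y$ iff $\exists z$ with $xRz$ and $zEy$. $xE_Qy$ iff $xQy$ and $yQx$. $\operatorname{qmax}Y=\{x: xRy\Rightarrow yRx\}$. For a relation $S$ and set $A$, $S[A]=\{y:\exists a\in A,\ aSy\}$. Global Kuroda principle: for every $x\in\operatorname{qmax}Y$, $E[x]\subseteq\operatorname{qmax}Y$. *)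

theory Defs
  imports "HOL-Analysis.Analysis"
begin

definition clopenin :: "'a topology \<Rightarrow> 'a set \<Rightarrow> bool" where
  "clopenin T U \<longleftrightarrow> openin T U \<and> closedin T U"

definition stone_space :: "'a topology \<Rightarrow> bool" where
  "stone_space T \<longleftrightarrow> compact_space T \<and> Hausdorff_space T \<and>
     (\<forall>U x. openin T U \<and> x \<in> U \<longrightarrow> (\<exists>C. clopenin T C \<and> x \<in> C \<and> C \<subseteq> U))"

definition continuous_rel :: "'a topology \<Rightarrow> 'a rel \<Rightarrow> bool" where
  "continuous_rel T R \<longleftrightarrow> R \<subseteq> topspace T \<times> topspace T \<and>
     (\<forall>x\<in>topspace T. closedin T (R `` {x})) \<and>
     (\<forall>U. clopenin T U \<longrightarrow> clopenin T ((R\<inverse>) `` U))"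

definition quasi_order_on :: "'a set \<Rightarrow> 'a rel \<Rightarrow> bool" where
  "quasi_order_on Y R \<longleftrightarrow> refl_on Y R \<and> trans R"

definition descriptive_MS4_frame :: "'a topology \<Rightarrow> 'a rel \<Rightarrow> 'a rel \<Rightarrow> bool" where
  "descriptive_MS4_frame T R E \<longleftrightarrow>
     stone_space T \<and>
     quasi_order_on (topspace T) R \<and> continuous_rel T R \<and>
     equiv (topspace T) E \<and> continuous_rel T E \<and>
     (\<forall>x y z. (x, y) \<in> E \<and> (y, z) \<in> R \<longrightarrow> (\<exists>u. (x, u) \<in> R \<and> (u, z) \<in> E))"

text \<open>x (E o R) y iff exists z with x R z and z E y: this is relcomp R E.\<close>
definition EcR :: "'a rel \<Rightarrow> 'a rel \<Rightarrow> 'a rel" where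
  "EcR E R = R O E"

definition eq_part :: "'a rel \<Rightarrow> 'a rel" where
  "eq_part Q = {(x, y). (x, y) \<in> Q \<and> (y, x) \<in> Q}"

definition qmax :: "'a set \<Rightarrow> 'a rel \<Rightarrow> 'a set" where
  "qmax Y R = {x \<in> Y. \<forall>y. (x, y) \<in> R \<longrightarrow> (y, x) \<in> R}"

definition global_Kuroda :: "'a topology \<Rightarrow> 'a rel \<Rightarrow> 'a rel \<Rightarrow> bool" where
  "global_Kuroda T R E \<longleftrightarrow>
     (\<forall>x \<in> qmax (topspace T) R. E `` {x} \<subseteq> qmax (topspace T) R)"

end

theory Submission
  imports Defs
begin

theorem lemma3p10:
  fixes T :: "'a topology" and R E :: "'a rel"
  assumes "descriptive_MS4_frame T R E"
  shows "E `` qmax (topspace T) R = eq_part (EcR E R) `` qmax (topspace T) R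
    \<and> (global_Kuroda T R E \<longleftrightarrow>
           (\<forall>x \<in> qmax (topspace T) R. eq_part (EcR E R) `` {x} \<subseteq> qmax (topspace T) R))
    \<and> ((\<forall>x \<in> qmax (topspace T) R. eq_part (EcR E R) `` {x} \<subseteq> qmax (topspace T) R) \<longleftrightarrow>
           eq_part (EcR E R) `` qmax (topspace T) R = qmax (topspace T) R)"
proof -
  let ?Y = "topspace T" and ?M = "qmax (topspace T) R" and ?Q = "eq_part (EcR E R)"
  have rR: "\<And>x. x \<in> ?Y \<Longrightarrow> (x,x) \<in> R" and tR: "trans R"
    and eq: "equiv ?Y E"
    and com: "\<And>x y z. (x, y) \<in> E \<Longrightarrow> (y, z) \<in> R \<Longrightarrow> (\<exists>u. (x, u) \<in> R \<and> (u, z) \<in> E)"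
    using assms unfolding descriptive_MS4_frame_def quasi_order_on_def refl_on_def by blast+
  have rE: "\<And>x. x \<in> ?Y \<Longrightarrow> (x,x) \<in> E" and sE: "\<And>x y. (x,y) \<in> E \<Longrightarrow> (y,x) \<in> E"
    and EY: "\<And>x y. (x,y) \<in> E \<Longrightarrow> y \<in> ?Y"
    using eq unfolding equiv_def refl_on_def sym_def by blast+
  have MY: "?M \<subseteq> ?Y" unfolding qmax_def by blast
  have A: "(x,y) \<in> ?Q" if h1: "x \<in> ?M" and h2: "(x,y) \<in> E" for x y
  proof -
    have xY: "x \<in> ?Y" using that MY by blast
    have "(x,y) \<in> EcR E R" using rR[OF xY] h2 unfolding EcR_def by blast
    moreover obtain u where "(y,u) \<in> R" "(u,x) \<in> E" using com[OF sE[OF h2] rR[OF xY]] by blast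
    then have "(y,x) \<in> EcR E R" unfolding EcR_def by blast
    ultimately show ?thesis unfolding eq_part_def by blast
  qed
  have B: "\<exists>z\<in>?M. (z,y) \<in> E" if h1: "x \<in> ?M" and h2: "(x,y) \<in> ?Q" for x y
  proof -
    obtain z where z: "(x,z) \<in> R" "(z,y) \<in> E" using h2 unfolding eq_part_def EcR_def by blast
    have zx: "(z,x) \<in> R" using h1 z(1) unfolding qmax_def by blast
    have zY: "z \<in> ?Y" using EY[OF sE[OF z(2)]] .
    have "z \<in> ?M" unfolding qmax_def
    proof (intro CollectI conjI allI impI zY)
      fix v assume "(z,v) \<in> R"
      then have "(x,v) \<in> R" using z(1) tR unfolding trans_def by blast
      then have "(v,x) \<in> R" using h1 unfolding qmax_def by blast
      then show "(v,z) \<in> R" using z(1) tR unfolding trans_def by blast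
    qed
    then show ?thesis using z(2) by blast
  qed
  have P1: "E `` ?M = ?Q `` ?M"
    using A B by blast
  have P2: "global_Kuroda T R E \<longleftrightarrow> (\<forall>x \<in> ?M. ?Q `` {x} \<subseteq> ?M)"
    unfolding global_Kuroda_def using A B by blast
  have P3: "(\<forall>x \<in> ?M. ?Q `` {x} \<subseteq> ?M) \<longleftrightarrow> ?Q `` ?M = ?M"
  proof
    assume h: "\<forall>x \<in> ?M. ?Q `` {x} \<subseteq> ?M"
    have "?M \<subseteq> ?Q `` ?M"
    proof
      fix x assume "x \<in> ?M"
      then have "(x,x) \<in> ?Q" using A rE MY by blast
      then show "x \<in> ?Q `` ?M" using \<open>x \<in> ?M\<close> by blast
    qed
    then show "?Q `` ?M = ?M" using h by blast
  next
    assume "?Q `` ?M = ?M" then show "\<forall>x \<in> ?M. ?Q `` {x} \<subseteq> ?M" by blast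
  qed
  show ?thesis using P1 P2 P3 by blast
qed

end
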